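(* Let $\mathcal{R}$ be a finite valuation ring with residue field of cardinality $q$ and with uniformizer of nilpotency degree $r$ (so $|\mathcal{R}|=q^r$). Let $\mathcal{R}^0$ denote the set of non-units of $\mathcal{R}$. Then there is a constant $c>0$ depending only on $r$ such that for every set $A\subset\mathcal{R}$ with $A\cap\mathcal{R}^0=\emptyset$ and $A\cap(\mathcal{R}^0-1)=\emptyset$ (i.e. every $a\in A$ satisfies that $a$ and $a+1$ are units), \[|A(A+1)|\ \ge\ c\min\left\{\sqrt{q^r|A|},\ \frac{|A|^2}{\sqrt{q^{2r-1}}}\right\},\] where $A(A+1)=\{a(b+1):a,b\in A\}$.
   Context: A finite valuation ring is a finite commutative ring with identity that is local (has a unique maximal ideal) and principal (every ideal is principal); its maximal ideal is generated by a non-unit $z$ (a uniformizer), the residue field $\mathcal{R}/(z)$ has $q$ elements, and $r$ is the least integer with $z^r=0$. $\mathcal{R}^0-1=\{t-1:t\in\mathcal{R}^0\}$. *)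

theory Defs
  imports "HOL-Algebra.Algebra" "HOL-Analysis.Analysis"
begin

definition finite_valuation_ring :: "('a, 'b) ring_scheme \<Rightarrow> bool" where
  "finite_valuation_ring R \<longleftrightarrow>
     cring R \<and> finite (carrier R) \<and> (\<exists>!I. maximalideal I R) \<and>
     (\<forall>I. ideal I R \<longrightarrow> principalideal I R)"

definition nonunits :: "('a, 'b) ring_scheme \<Rightarrow> 'a set" where
  "nonunits R = carrier R - Units R"

definition prod_shift_set :: "('a, 'b) ring_scheme \<Rightarrow> 'a set \<Rightarrow> 'a set" where
  "prod_shift_set R A = {a \<otimes>\<^bsub>R\<^esub> (b \<oplus>\<^bsub>R\<^esub> \<one>\<^bsub>R\<^esub>) | a b. a \<in> A \<and> b \<in> A}"

end

theory Submission
  imports Defs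
begin

definition on_line :: "('a, 'b) ring_scheme \<Rightarrow> 'a \<times> 'a \<Rightarrow> 'a \<times> 'a \<Rightarrow> bool" where
  "on_line R l p \<longleftrightarrow> snd p = fst l \<otimes>\<^bsub>R\<^esub> fst p \<oplus>\<^bsub>R\<^esub> snd l"

lemma final_arith:
  fixes Y s N T :: real
  assumes Y: "Y \<ge> 0" and s: "s \<ge> 0" and N: "N > 0" and T: "T \<ge> 0"
    and h: "Y ^ 3 \<le> s^2 * Y^2 / N + Y * s * T"
  shows "1/2 * min (sqrt (N * Y)) (Y^2 / T) \<le> s"
proof (cases "Y = 0")
  case True then show ?thesis using s by simp
next
  case False
  then have Xp: "Y > 0" using Y by simp
  have h2: "Y \<le> s^2 / N + s * T / Y"
  proof -
    have "Y ^ 3 = Y^2 * Y" by (simp add: power3_eq_cube power2_eq_square)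
    moreover have "s^2 * Y^2 / N + Y * s * T = Y^2 * (s^2 / N + s * T / Y)"
      using Xp by (simp add: field_simps power2_eq_square)
    ultimately have "Y^2 * Y \<le> Y^2 * (s^2 / N + s * T / Y)" using h by simp
    then show ?thesis using Xp by (simp add: mult_le_cancel_left_pos)
  qed
  show ?thesis
  proof (cases "s^2 / N \<ge> Y / 2")
    case True
    then have "N * Y \<le> s * (s * 2)" using N by (simp add: field_simps power2_eq_square)
    moreover have "s * s \<ge> 0" using s by simp
    moreover have "(2 * s)^2 = 4 * (s * s)" by (simp add: power2_eq_square)
    moreover have "s * (s * 2) = 2 * (s * s)" by simp
    ultimately have "N * Y \<le> (2 * s)^2" by linarith
    then have "sqrt (N * Y) \<le> sqrt ((2 * s)^2)" by (rule real_sqrt_le_mono)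
    also have "\<dots> = 2 * s" using s by (simp only: real_sqrt_abs abs_of_nonneg)
    finally have "sqrt (N * Y) \<le> 2 * s" .
    then show ?thesis by linarith
  next
    case False
    then have "s * T / Y \<ge> Y / 2" using h2 by linarith
    then have st: "s * T \<ge> Y^2 / 2" using Xp by (simp add: field_simps power2_eq_square)
    have "Y * Y > 0" using Xp by simp
    then have Tp: "T > 0" using st T by (cases "T = 0") (auto simp: power2_eq_square)
    then have "Y^2 / T \<le> 2 * s" using st by (simp add: field_simps)
    then show ?thesis by linarith
  qed
qed

context cring begin

lemma nonunit_in_maximal:
  assumes fin: "finite (carrier R)" and x: "x \<in> carrier R" "x \<notin> Units R"
  shows "\<exists>I. maximalideal I R \<and> x \<in> I"
proof -
  define F where "F = {J. ideal J R \<and> x \<in> J \<and> \<one> \<notin> J}"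
  have "PIdl x \<in> F"
  proof -
    have "\<one> \<notin> PIdl x"
    proof
      assume "\<one> \<in> PIdl x"
      then obtain y where y: "y \<in> carrier R" "\<one> = y \<otimes> x" unfolding cgenideal_def by auto
      then have "x \<in> Units R" using x unfolding Units_def by (auto simp: m_comm)
      with x show False by simp
    qed
    then show ?thesis unfolding F_def using cgenideal_ideal[OF x(1)] cgenideal_self[OF x(1)] by auto
  qed
  have Fsub: "F \<subseteq> Pow (carrier R)" unfolding F_def using ideal.Icarr by fastforce
  have finF: "finite F" using finite_subset[OF Fsub] fin by auto
  define m where "m = Max (card ` F)"
  have "m \<in> card ` F" unfolding m_def using finF \<open>PIdl x \<in> F\<close> by (intro Max_in) auto
  then obtain J where J: "J \<in> F" "card J = m" by auto
  have Jmax: "card J' \<le> card J" if "J' \<in> F" for J'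
    using J(2) finF that unfolding m_def by auto
  have "maximalideal J R"
  proof (rule maximalidealI)
    show "ideal J R" using J unfolding F_def by auto
    show "carrier R \<noteq> J" using J unfolding F_def by auto
    fix J' assume J': "ideal J' R" "J \<subseteq> J'" "J' \<subseteq> carrier R"
    show "J' = J \<or> J' = carrier R"
    proof (cases "\<one> \<in> J'")
      case True then show ?thesis using ideal.one_imp_carrier[OF J'(1)] by auto
    next
      case False
      then have "J' \<in> F" using J'(1,2) J(1) unfolding F_def by auto
      then have "card J' \<le> card J" by (rule Jmax)
      moreover have "finite J'" using J'(3) fin finite_subset by auto
      ultimately have "J' = J" using J'(2) card_seteq by blast
      then show ?thesis by simp
    qed
  qed
  then show ?thesis using J unfolding F_def by auto
qed

lemma fiber_count:
  assumes fin: "finite (carrier R)" and a: "a \<in> carrier R" and D: "D \<subseteq> carrier R"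
    and cl1: "\<And>x y. x \<in> D \<Longrightarrow> y \<in> D \<Longrightarrow> x \<oplus> y \<in> D"
    and K: "{x \<in> carrier R. a \<otimes> x = \<zero>} \<subseteq> D"
  shows "card D = card ((\<lambda>x. a \<otimes> x) ` D) * card {x \<in> carrier R. a \<otimes> x = \<zero>}"
proof -
  define K where "K = {x \<in> carrier R. a \<otimes> x = \<zero>}"
  define h where "h = (\<lambda>x. a \<otimes> x)"
  have finD: "finite D" using D fin finite_subset by auto
  have Deq: "D = (\<Union>y\<in>h`D. {x\<in>D. h x = y})" by auto
  have "card D = (\<Sum>y\<in>h`D. card {x\<in>D. h x = y})"
    by (subst Deq, rule card_UN_disjoint) (use finD in auto)
  also have "\<dots> = (\<Sum>y\<in>h`D. card K)"
  proof (rule sum.cong)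
    fix y assume "y \<in> h ` D"
    then obtain x0 where x0: "x0 \<in> D" "y = h x0" by auto
    have x0c: "x0 \<in> carrier R" using x0 D by auto
    have "bij_betw (\<lambda>k. x0 \<oplus> k) K {x\<in>D. h x = y}"
    proof (rule bij_betw_byWitness[where f'="\<lambda>x. \<ominus> x0 \<oplus> x"])
      show "\<forall>k\<in>K. \<ominus> x0 \<oplus> (x0 \<oplus> k) = k" unfolding K_def using x0c
        by (metis (no_types, lifting) a_assoc add.inv_closed l_neg l_zero mem_Collect_eq)
      show "\<forall>x\<in>{x\<in>D. h x = y}. x0 \<oplus> (\<ominus> x0 \<oplus> x) = x" using x0c D
        by (metis (no_types, lifting) a_assoc add.inv_closed r_neg l_zero mem_Collect_eq subsetD)
      show "(\<lambda>k. x0 \<oplus> k) ` K \<subseteq> {x\<in>D. h x = y}"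
      proof
        fix w assume "w \<in> (\<lambda>k. x0 \<oplus> k) ` K"
        then obtain k where k: "k \<in> K" "w = x0 \<oplus> k" by auto
        have "k \<in> carrier R" "a \<otimes> k = \<zero>" using k unfolding K_def by auto
        moreover have "k \<in> D" using k K unfolding K_def by auto
        ultimately show "w \<in> {x\<in>D. h x = y}" using k x0 x0c a cl1
          unfolding h_def by (auto simp: r_distr)
      qed
      show "(\<lambda>x. \<ominus> x0 \<oplus> x) ` {x\<in>D. h x = y} \<subseteq> K"
      proof
        fix w assume "w \<in> (\<lambda>x. \<ominus> x0 \<oplus> x) ` {x\<in>D. h x = y}"
        then obtain x where xx: "x \<in> D" "h x = y" "w = \<ominus> x0 \<oplus> x" by auto
        have xc: "x \<in> carrier R" using xx D by auto
        have "a \<otimes> w = \<ominus> (a \<otimes> x0) \<oplus> a \<otimes> x" using xx xc x0c a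
          by (simp add: r_distr r_minus)
        also have "\<dots> = \<zero>" using xx x0 unfolding h_def using xc x0c a by (simp add: l_neg)
        finally show "w \<in> K" unfolding K_def using xx xc x0c by auto
      qed
    qed
    then show "card {x\<in>D. h x = y} = card K" by (simp add: bij_betw_same_card)
  qed simp
  finally show ?thesis unfolding K_def h_def by simp
qed

lemma local_units:
  assumes fin: "finite (carrier R)"
    and zc: "z \<in> carrier R" and Mmax: "maximalideal (PIdl z) R"
    and uniq: "\<And>I. maximalideal I R \<Longrightarrow> I = PIdl z"
    and x: "x \<in> carrier R"
  shows "x \<in> PIdl z \<longleftrightarrow> x \<notin> Units R"
proof
  assume xm: "x \<in> PIdl z"
  show "x \<notin> Units R"
  proof
    assume u: "x \<in> Units R"
    have "inv x \<otimes> x \<in> PIdl z"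
      by (rule ideal.I_l_closed[OF cgenideal_ideal[OF zc] xm]) (use u in simp)
    then have "\<one> \<in> PIdl z" using u by simp
    then have "PIdl z = carrier R" by (rule ideal.one_imp_carrier[OF cgenideal_ideal[OF zc]])
    then show False using maximalideal.I_notcarr[OF Mmax] by simp
  qed
next
  assume "x \<notin> Units R"
  then obtain I where "maximalideal I R" "x \<in> I" using nonunit_in_maximal[OF fin x] by auto
  then show "x \<in> PIdl z" using uniq by auto
qed

lemma card_q_pow:
  assumes fin: "finite (carrier R)"
    and zc: "z \<in> carrier R" and Mmax: "maximalideal (PIdl z) R"
    and uniq: "\<And>I. maximalideal I R \<Longrightarrow> I = PIdl z"
    and zr: "z [^] (r::nat) = \<zero>" and znz: "\<forall>n<r. z [^] (n::nat) \<noteq> \<zero>"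
  shows "card (carrier R) = card (a_rcosets (PIdl z)) ^ r"
proof -
  define M where "M = PIdl z"
  define q where "q = card (a_rcosets M)"
  define II where "II i = (\<lambda>x. z [^] (i::nat) \<otimes> x) ` carrier R" for i
  have Mid: "ideal M R" unfolding M_def by (rule cgenideal_ideal[OF zc])
  have Msub: "M \<subseteq> carrier R" using ideal.Icarr[OF Mid] by blast
  have lag: "q * card M = card (carrier R)"
    unfolding q_def using a_lagrange[OF fin ideal.axioms(1)[OF Mid]] by (simp add: Coset.order_def)
  have step: "card (II i) = q * card (II (Suc i))" if ir: "i < r" for i
  proof -
    define K where "K = {x \<in> carrier R. z [^] i \<otimes> x = \<zero>}"
    have zic: "z [^] i \<in> carrier R" using zc by simp
    have KM: "K \<subseteq> M"
    proof
      fix x assume "x \<in> K"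
      then have xc: "x \<in> carrier R" and e: "z [^] i \<otimes> x = \<zero>" unfolding K_def by auto
      show "x \<in> M"
      proof (rule ccontr)
        assume "x \<notin> M"
        then have u: "x \<in> Units R" using local_units[OF fin zc Mmax uniq xc] unfolding M_def by auto
        have "z [^] i = (z [^] i \<otimes> x) \<otimes> inv x" using u zic xc
          by (simp add: m_assoc)
        also have "\<dots> = \<zero>" using e u by simp
        finally show False using znz ir by auto
      qed
    qed
    have c1: "card (carrier R) = card (II i) * card K"
      unfolding II_def K_def
      by (rule fiber_count[OF fin zic]) (use KM Msub K_def in auto)
    have Mcl: "x \<oplus> y \<in> M" if "x \<in> M" "y \<in> M" for x y
      using that Mid by (simp add: additive_subgroup.a_closed ideal.axioms(1))
    have c2: "card M = card ((\<lambda>x. z [^] i \<otimes> x) ` M) * card K"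
      unfolding K_def
      by (rule fiber_count[OF fin zic Msub]) (use Mcl KM K_def in auto)
    have img: "(\<lambda>x. z [^] i \<otimes> x) ` M = II (Suc i)"
    proof
      show "(\<lambda>x. z [^] i \<otimes> x) ` M \<subseteq> II (Suc i)"
      proof
        fix w assume "w \<in> (\<lambda>x. z [^] i \<otimes> x) ` M"
        then obtain y where y: "y \<in> carrier R" "w = z [^] i \<otimes> (y \<otimes> z)"
          unfolding M_def cgenideal_def by auto
        then have "w = z [^] Suc i \<otimes> y" using zc
          by (simp add: m_assoc m_comm[of y z])
        then show "w \<in> II (Suc i)" unfolding II_def using y by auto
      qed
      show "II (Suc i) \<subseteq> (\<lambda>x. z [^] i \<otimes> x) ` M"
      proof
        fix w assume "w \<in> II (Suc i)"
        then obtain y where y: "y \<in> carrier R" "w = z [^] Suc i \<otimes> y"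
          unfolding II_def by auto
        then have "w = z [^] i \<otimes> (y \<otimes> z)" using zc
          by (simp add: m_assoc m_comm[of y z])
        moreover have "y \<otimes> z \<in> M" unfolding M_def cgenideal_def using y by auto
        ultimately show "w \<in> (\<lambda>x. z [^] i \<otimes> x) ` M" by auto
      qed
    qed
    have Kpos: "card K > 0"
    proof -
      have "\<zero> \<in> K" unfolding K_def using zic by simp
      moreover have "finite K" unfolding K_def using fin by auto
      ultimately show ?thesis by (auto simp: card_gt_0_iff)
    qed
    have "card (II i) * card K = q * card (II (Suc i)) * card K"
      using c1 c2 img lag by (metis mult.assoc)
    then show ?thesis using Kpos by simp
  qed
  have IIr: "II r = {\<zero>}" unfolding II_def using zr by auto
  have II0: "II 0 = carrier R" unfolding II_def by auto
  have "\<forall>j. j \<le> r \<longrightarrow> card (II (r - j)) = q ^ j"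
  proof (intro allI)
    fix j show "j \<le> r \<longrightarrow> card (II (r - j)) = q ^ j"
    proof (induction j)
      case 0 then show ?case using IIr by simp
    next
      case (Suc j)
      show ?case
      proof
        assume a: "Suc j \<le> r"
        then have "card (II (r - Suc j)) = q * card (II (Suc (r - Suc j)))" by (intro step) auto
        also have "Suc (r - Suc j) = r - j" using a by simp
        finally show "card (II (r - Suc j)) = q ^ Suc j" using Suc a by simp
      qed
    qed
  qed
  then have "card (II 0) = q ^ r" by (metis diff_self_eq_0 le_refl)
  then show ?thesis using II0 unfolding q_def M_def by simp
qed

lemma line_pair_bound:
  assumes fin: "finite (carrier R)" and xc: "x \<in> carrier R" and yc: "y \<in> carrier R" and uc: "u \<in> carrier R" and vc: "v \<in> carrier R"
  shows "card {l \<in> carrier R \<times> carrier R. on_line R l (x,y) \<and> on_line R l (u,v)}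
    \<le> (if u \<ominus> x \<in> Units R then 1 else 0)
       + card {m \<in> carrier R. u \<ominus> x \<notin> Units R \<and> v \<ominus> y = m \<otimes> (u \<ominus> x)}"
proof -
  define T where "T = {m \<in> carrier R. v \<ominus> y = m \<otimes> (u \<ominus> x)}"
  have finT: "finite T" unfolding T_def using fin by auto
  have le1: "card {l \<in> carrier R \<times> carrier R. on_line R l (x,y) \<and> on_line R l (u,v)} \<le> card T"
  proof (rule card_inj_on_le[where f=fst])
    show "inj_on fst {l \<in> carrier R \<times> carrier R. on_line R l (x,y) \<and> on_line R l (u,v)}"
    proof (rule inj_onI)
      fix l l' assume l: "l \<in> {l \<in> carrier R \<times> carrier R. on_line R l (x,y) \<and> on_line R l (u,v)}"
        and l': "l' \<in> {l \<in> carrier R \<times> carrier R. on_line R l (x,y) \<and> on_line R l (u,v)}"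
        and e: "fst l = fst l'"
      obtain m k where mk: "l = (m,k)" "m \<in> carrier R" "k \<in> carrier R" "y = m \<otimes> x \<oplus> k"
        using l unfolding on_line_def by auto
      obtain m' k' where mk': "l' = (m',k')" "m' \<in> carrier R" "k' \<in> carrier R" "y = m' \<otimes> x \<oplus> k'"
        using l' unfolding on_line_def by auto
      have "m = m'" using e mk mk' by simp
      have "k = (m \<otimes> x \<oplus> k) \<ominus> m \<otimes> x" using mk xc by algebra
      also have "\<dots> = (m' \<otimes> x \<oplus> k') \<ominus> m' \<otimes> x" using mk mk' \<open>m = m'\<close> by simp
      also have "\<dots> = k'" using mk' xc by algebra
      finally show "l = l'" using mk mk' \<open>m = m'\<close> by simp
    qed
    show "fst ` {l \<in> carrier R \<times> carrier R. on_line R l (x,y) \<and> on_line R l (u,v)} \<subseteq> T"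
    proof
      fix w assume "w \<in> fst ` {l \<in> carrier R \<times> carrier R. on_line R l (x,y) \<and> on_line R l (u,v)}"
      then obtain k where k: "w \<in> carrier R" "k \<in> carrier R" "y = w \<otimes> x \<oplus> k" "v = w \<otimes> u \<oplus> k"
        unfolding on_line_def by auto
      have "v \<ominus> y = (w \<otimes> u \<oplus> k) \<ominus> (w \<otimes> x \<oplus> k)" using k by simp
      also have "\<dots> = w \<otimes> (u \<ominus> x)" using k xc uc by algebra
      finally show "w \<in> T" unfolding T_def using k by simp
    qed
    show "finite T" by (rule finT)
  qed
  show ?thesis
  proof (cases "u \<ominus> x \<in> Units R")
    case True
    have "T \<subseteq> {(v \<ominus> y) \<otimes> inv (u \<ominus> x)}"
    proof
      fix m assume "m \<in> T"
      then have m: "m \<in> carrier R" "v \<ominus> y = m \<otimes> (u \<ominus> x)" unfolding T_def by auto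
      have "(v \<ominus> y) \<otimes> inv (u \<ominus> x) = m \<otimes> ((u \<ominus> x) \<otimes> inv (u \<ominus> x))"
        using m True xc uc by (simp add: m_assoc)
      also have "\<dots> = m" using True m by simp
      finally show "m \<in> {(v \<ominus> y) \<otimes> inv (u \<ominus> x)}" by simp
    qed
    then have "card T \<le> 1" using card_mono[of "{(v \<ominus> y) \<otimes> inv (u \<ominus> x)}" T] by simp
    then show ?thesis using le1 True by simp
  next
    case False
    then have "T = {m \<in> carrier R. u \<ominus> x \<notin> Units R \<and> v \<ominus> y = m \<otimes> (u \<ominus> x)}"
      unfolding T_def by auto
    then show ?thesis using le1 False by simp
  qed
qed

lemma card_filter_sum: "finite A \<Longrightarrow> card {x\<in>A. Q x} = (\<Sum>x\<in>A. of_bool (Q x) :: nat)"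
  by (simp add: Int_def conj_commute)

lemma per_point_bound:
  assumes fin: "finite (carrier R)" and P: "P \<subseteq> carrier R \<times> carrier R"
    and xc: "x \<in> carrier R" and yc: "y \<in> carrier R"
  shows "(\<Sum>p'\<in>P. card {l \<in> carrier R \<times> carrier R. on_line R l (x,y) \<and> on_line R l p'})
     \<le> card P + card (carrier R - Units R) * card (carrier R)"
proof -
  have finP: "finite P" using P fin finite_subset by (metis finite_SigmaI)
  define B where "B p' = {m \<in> carrier R. fst p' \<ominus> x \<notin> Units R \<and> snd p' \<ominus> y = m \<otimes> (fst p' \<ominus> x)}" for p'
  have "(\<Sum>p'\<in>P. card {l \<in> carrier R \<times> carrier R. on_line R l (x,y) \<and> on_line R l p'})
     \<le> (\<Sum>p'\<in>P. (if fst p' \<ominus> x \<in> Units R then 1 else 0) + card (B p'))"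
  proof (rule sum_mono)
    fix p' assume "p' \<in> P"
    then obtain u v where "p' = (u,v)" "u \<in> carrier R" "v \<in> carrier R" using P by auto
    then show "card {l \<in> carrier R \<times> carrier R. on_line R l (x,y) \<and> on_line R l p'}
      \<le> (if fst p' \<ominus> x \<in> Units R then 1 else 0) + card (B p')"
      unfolding B_def using line_pair_bound[OF fin xc yc] by simp
  qed
  also have "\<dots> = (\<Sum>p'\<in>P. (if fst p' \<ominus> x \<in> Units R then 1 else 0)) + (\<Sum>p'\<in>P. card (B p'))"
    by (simp add: sum.distrib)
  also have "\<dots> \<le> card P + card (carrier R - Units R) * card (carrier R)"
  proof (rule add_mono)
    have "(\<Sum>p'\<in>P. (if fst p' \<ominus> x \<in> Units R then 1 else 0::nat)) \<le> (\<Sum>p'\<in>P. 1)"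
      by (rule sum_mono) auto
    then show "(\<Sum>p'\<in>P. (if fst p' \<ominus> x \<in> Units R then 1 else 0)) \<le> card P" by simp
    have finB: "\<forall>p'\<in>P. finite (B p')" unfolding B_def using fin by auto
    have "(\<Sum>p'\<in>P. card (B p')) = card (Sigma P B)" using card_SigmaI[OF finP finB] by simp
    also have "\<dots> \<le> card ((carrier R - Units R) \<times> carrier R)"
    proof (rule card_inj_on_le[where f="\<lambda>(p',m). (fst p' \<ominus> x, m)"])
      show "inj_on (\<lambda>(p',m). (fst p' \<ominus> x, m)) (Sigma P B)"
      proof (rule inj_onI)
        fix a b assume a: "a \<in> Sigma P B" and b: "b \<in> Sigma P B"
          and e: "(\<lambda>(p',m). (fst p' \<ominus> x, m)) a = (\<lambda>(p',m). (fst p' \<ominus> x, m)) b"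
        obtain u v m where am: "a = ((u,v),m)" "u \<in> carrier R" "v \<in> carrier R" "m \<in> carrier R"
          "v \<ominus> y = m \<otimes> (u \<ominus> x)"
          using a P unfolding B_def by auto
        obtain u' v' m' where bm: "b = ((u',v'),m')" "u' \<in> carrier R" "v' \<in> carrier R" "m' \<in> carrier R"
          "v' \<ominus> y = m' \<otimes> (u' \<ominus> x)"
          using b P unfolding B_def by auto
        have d: "u \<ominus> x = u' \<ominus> x" and mm: "m = m'" using e am bm by auto
        have "u = (u \<ominus> x) \<oplus> x" using am xc by algebra
        also have "\<dots> = (u' \<ominus> x) \<oplus> x" using d by simp
        also have "\<dots> = u'" using bm xc by algebra
        finally have uu: "u = u'" .
        have "v = (v \<ominus> y) \<oplus> y" using am(3) yc by algebra
        also have "\<dots> = (v' \<ominus> y) \<oplus> y" using am bm uu mm by simp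
        also have "\<dots> = v'" using bm(3) yc by algebra
        finally show "a = b" using am bm uu mm by simp
      qed
      show "(\<lambda>(p',m). (fst p' \<ominus> x, m)) ` Sigma P B \<subseteq> (carrier R - Units R) \<times> carrier R"
        using P xc unfolding B_def by (auto simp: minus_eq)
      show "finite ((carrier R - Units R) \<times> carrier R)" using fin by auto
    qed
    also have "\<dots> = card (carrier R - Units R) * card (carrier R)" by (simp add: card_cartesian_product)
    finally show "(\<Sum>p'\<in>P. card (B p')) \<le> card (carrier R - Units R) * card (carrier R)" .
  qed
  finally show ?thesis .
qed

lemma incid_sum_sq:
  assumes fin: "finite (carrier R)" and P: "P \<subseteq> carrier R \<times> carrier R"
  shows "(\<Sum>l\<in>carrier R \<times> carrier R. (card {p\<in>P. on_line R l p})^2)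
    \<le> card P * (card P + card (carrier R - Units R) * card (carrier R))"
proof -
  define LL where "LL = carrier R \<times> carrier R"
  have finP: "finite P" using P fin finite_subset by (metis finite_SigmaI)
  have finLL: "finite LL" unfolding LL_def using fin by auto
  have "(\<Sum>l\<in>LL. (card {p\<in>P. on_line R l p})^2)
     = (\<Sum>l\<in>LL. \<Sum>p\<in>P. \<Sum>p'\<in>P. of_bool (on_line R l p) * of_bool (on_line R l p'))"
    by (simp add: card_filter_sum[OF finP] power2_eq_square sum_product)
  also have "\<dots> = (\<Sum>p\<in>P. \<Sum>l\<in>LL. \<Sum>p'\<in>P. of_bool (on_line R l p) * of_bool (on_line R l p'))"
    by (rule sum.swap)
  also have "\<dots> = (\<Sum>p\<in>P. \<Sum>p'\<in>P. \<Sum>l\<in>LL. of_bool (on_line R l p) * of_bool (on_line R l p'))"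
    by (rule sum.cong[OF refl], rule sum.swap)
  also have "\<dots> = (\<Sum>p\<in>P. \<Sum>p'\<in>P. card {l\<in>LL. on_line R l p \<and> on_line R l p'})"
    by (simp add: card_filter_sum[OF finLL] of_bool_conj)
  also have "\<dots> \<le> (\<Sum>p\<in>P. card P + card (carrier R - Units R) * card (carrier R))"
  proof (rule sum_mono)
    fix p assume "p \<in> P"
    then obtain x y where "p = (x,y)" "x \<in> carrier R" "y \<in> carrier R" using P by auto
    then show "(\<Sum>p'\<in>P. card {l\<in>LL. on_line R l p \<and> on_line R l p'})
        \<le> card P + card (carrier R - Units R) * card (carrier R)"
      unfolding LL_def using per_point_bound[OF fin P] by simp
  qed
  also have "\<dots> = card P * (card P + card (carrier R - Units R) * card (carrier R))" by simp
  finally show ?thesis unfolding LL_def .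
qed

lemma incid_sum:
  assumes fin: "finite (carrier R)" and P: "P \<subseteq> carrier R \<times> carrier R"
  shows "(\<Sum>l\<in>carrier R \<times> carrier R. card {p\<in>P. on_line R l p}) = card P * card (carrier R)"
proof -
  define LL where "LL = carrier R \<times> carrier R"
  have finP: "finite P" using P fin finite_subset by (metis finite_SigmaI)
  have finLL: "finite LL" unfolding LL_def using fin by auto
  have "(\<Sum>l\<in>LL. card {p\<in>P. on_line R l p}) = (\<Sum>l\<in>LL. \<Sum>p\<in>P. of_bool (on_line R l p))"
    by (simp add: card_filter_sum[OF finP])
  also have "\<dots> = (\<Sum>p\<in>P. \<Sum>l\<in>LL. of_bool (on_line R l p))" by (rule sum.swap)
  also have "\<dots> = (\<Sum>p\<in>P. card {l\<in>LL. on_line R l p})" by (simp add: card_filter_sum[OF finLL] of_bool_conj)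
  also have "\<dots> = (\<Sum>p\<in>P. card (carrier R))"
  proof (rule sum.cong[OF refl])
    fix p assume "p \<in> P"
    then obtain x y where p: "p = (x,y)" "x \<in> carrier R" "y \<in> carrier R" using P by auto
    have "bij_betw (\<lambda>m. (m, y \<ominus> m \<otimes> x)) (carrier R) {l\<in>LL. on_line R l p}"
    proof (rule bij_betw_byWitness[where f'=fst])
      show "\<forall>a\<in>carrier R. fst (a, y \<ominus> a \<otimes> x) = a" by simp
      show "\<forall>a'\<in>{l\<in>LL. on_line R l p}. (fst a', y \<ominus> fst a' \<otimes> x) = a'"
      proof
        fix a' assume "a' \<in> {l\<in>LL. on_line R l p}"
        then obtain m k where "a' = (m,k)" "m \<in> carrier R" "k \<in> carrier R" "y = m \<otimes> x \<oplus> k"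
          unfolding LL_def on_line_def using p by auto
        moreover have "(m \<otimes> x \<oplus> k) \<ominus> m \<otimes> x = k" using calculation p by algebra
        ultimately show "(fst a', y \<ominus> fst a' \<otimes> x) = a'" by simp
      qed
      show "(\<lambda>m. (m, y \<ominus> m \<otimes> x)) ` carrier R \<subseteq> {l\<in>LL. on_line R l p}"
      proof
        fix w assume "w \<in> (\<lambda>m. (m, y \<ominus> m \<otimes> x)) ` carrier R"
        then obtain m where m: "m \<in> carrier R" "w = (m, y \<ominus> m \<otimes> x)" by auto
        have "y = m \<otimes> x \<oplus> (y \<ominus> m \<otimes> x)" using m p by algebra
        then show "w \<in> {l\<in>LL. on_line R l p}" unfolding LL_def on_line_def using m p by auto
      qed
      show "fst ` {l\<in>LL. on_line R l p} \<subseteq> carrier R" unfolding LL_def by auto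
    qed
    then show "card {l\<in>LL. on_line R l p} = card (carrier R)" by (simp add: bij_betw_same_card)
  qed
  also have "\<dots> = card P * card (carrier R)" by simp
  finally show ?thesis unfolding LL_def .
qed

lemma incidence_bound:
  assumes fin: "finite (carrier R)" and P: "P \<subseteq> carrier R \<times> carrier R"
    and L: "L \<subseteq> carrier R \<times> carrier R"
  shows "real (\<Sum>l\<in>L. card {p\<in>P. on_line R l p})
    \<le> real (card P) * real (card L) / real (card (carrier R))
       + sqrt (real (card L) * real (card P) * real (card (carrier R - Units R)) * real (card (carrier R)))"
proof -
  define LL where "LL = carrier R \<times> carrier R"
  define N where "N = real (card (carrier R))"
  define f where "f l = real (card {p\<in>P. on_line R l p})" for l
  define mu where "mu = real (card P) / N"
  define h where "h l = f l - mu" for l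
  have finLL: "finite LL" unfolding LL_def using fin by auto
  have finL: "finite L" using L fin finite_subset by (metis finite_SigmaI)
  have Npos: "N > 0" unfolding N_def using fin card_gt_0_iff[of "carrier R"] by auto
  have cLL: "real (card LL) = N * N" unfolding LL_def N_def by (simp add: card_cartesian_product)
  have s1: "(\<Sum>l\<in>LL. f l) = real (card P) * N"
  proof -
    have "(\<Sum>l\<in>LL. f l) = real (\<Sum>l\<in>LL. card {p\<in>P. on_line R l p})"
      unfolding f_def by simp
    also have "\<dots> = real (card P * card (carrier R))" unfolding LL_def using incid_sum[OF fin P] by simp
    finally show ?thesis unfolding N_def by simp
  qed
  have s2: "(\<Sum>l\<in>LL. (f l)^2) \<le> real (card P) * (real (card P) + real (card (carrier R - Units R)) * N)"
  proof -
    have "(\<Sum>l\<in>LL. (f l)^2) = real (\<Sum>l\<in>LL. (card {p\<in>P. on_line R l p})^2)"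
      unfolding f_def by simp
    also have "\<dots> \<le> real (card P * (card P + card (carrier R - Units R) * card (carrier R)))"
      unfolding LL_def using incid_sum_sq[OF fin P] by linarith
    finally show ?thesis unfolding N_def by simp
  qed
  have V: "(\<Sum>l\<in>LL. (h l)^2) \<le> real (card P) * real (card (carrier R - Units R)) * N"
  proof -
    have "(\<Sum>l\<in>LL. (h l)^2) = (\<Sum>l\<in>LL. (f l)^2 - 2 * mu * f l + mu^2)"
      unfolding h_def by (simp add: power2_diff algebra_simps)
    also have "\<dots> = (\<Sum>l\<in>LL. (f l)^2) - 2 * mu * (\<Sum>l\<in>LL. f l) + real (card LL) * mu^2"
      by (simp add: sum.distrib sum_subtractf sum_distrib_left)
    also have "\<dots> = (\<Sum>l\<in>LL. (f l)^2) - real (card P)^2"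
      using Npos unfolding s1 cLL mu_def by (simp add: field_simps power2_eq_square)
    also have "\<dots> \<le> real (card P) * real (card (carrier R - Units R)) * N"
      using s2 by (simp add: algebra_simps power2_eq_square)
    finally show ?thesis .
  qed
  have "(\<Sum>l\<in>L. h l)^2 \<le> (\<Sum>l\<in>L. (h l)^2) * real (card L)"
    by (rule sum_squared_le_sum_of_squares)
  also have "\<dots> \<le> (\<Sum>l\<in>LL. (h l)^2) * real (card L)"
    by (rule mult_right_mono, rule sum_mono2[OF finLL]) (use L in \<open>auto simp: LL_def\<close>)
  finally have "(\<Sum>l\<in>L. h l) \<le> sqrt ((\<Sum>l\<in>LL. (h l)^2) * real (card L))"
    by (rule real_le_rsqrt)
  also have "\<dots> \<le> sqrt (real (card L) * real (card P) * real (card (carrier R - Units R)) * N)"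
  proof (intro real_sqrt_le_mono)
    have "real (card L) * (\<Sum>l\<in>LL. (h l)^2) \<le> real (card L) * (real (card P) * real (card (carrier R - Units R)) * N)"
      by (rule mult_left_mono[OF V]) simp
    then show "(\<Sum>l\<in>LL. (h l)^2) * real (card L) \<le> real (card L) * real (card P) * real (card (carrier R - Units R)) * N"
      by (simp add: mult_ac)
  qed
  finally have hb: "(\<Sum>l\<in>L. h l) \<le> sqrt (real (card L) * real (card P) * real (card (carrier R - Units R)) * N)" .
  have "(\<Sum>l\<in>L. f l) = (\<Sum>l\<in>L. h l) + real (card L) * mu"
    unfolding h_def by (simp add: sum_subtractf)
  then have "(\<Sum>l\<in>L. f l) \<le> real (card P) * real (card L) / N
       + sqrt (real (card L) * real (card P) * real (card (carrier R - Units R)) * N)"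
    using hb unfolding mu_def by (simp add: field_simps)
  then show ?thesis unfolding f_def N_def by simp
qed

lemma quot_card:
  assumes fin: "finite (carrier R)" and zc: "z \<in> carrier R"
  shows "card (a_rcosets (PIdl z)) * card (PIdl z) = card (carrier R)"
  using a_lagrange[OF fin ideal.axioms(1)[OF cgenideal_ideal[OF zc]]] by (simp add: Coset.order_def)

lemma unit_cancel_r: "u \<in> Units R \<Longrightarrow> x \<in> carrier R \<Longrightarrow> x \<otimes> u \<otimes> inv u = x"
  by (metis Units_closed Units_inv_closed Units_r_inv r_one m_assoc)

lemma main_bound:
  assumes fin: "finite (carrier R)"
    and zc: "z \<in> carrier R" and Mmax: "maximalideal (PIdl z) R"
    and uniq: "\<And>I. maximalideal I R \<Longrightarrow> I = PIdl z"
    and zr: "z [^] (r::nat) = \<zero>" and znz: "\<forall>n<r. z [^] (n::nat) \<noteq> \<zero>"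
    and qdef: "q = card (a_rcosets (PIdl z))"
    and Asub: "A \<subseteq> carrier R"
    and AU: "\<And>a. a \<in> A \<Longrightarrow> a \<in> Units R"
    and A1U: "\<And>a. a \<in> A \<Longrightarrow> a \<oplus> \<one> \<in> Units R"
  shows "1/2 * min (sqrt (real q ^ r * real (card A))) (real (card A) ^ 2 / sqrt (real q ^ (2 * r - 1)))
     \<le> real (card (prod_shift_set R A))"
proof -
  define M where "M = PIdl z"
  define N where "N = card (carrier R)"
  define S where "S = prod_shift_set R A"
  define P where "P = S \<times> S"
  define g where "g = (\<lambda>(b, c). (c \<otimes> inv (b \<oplus> \<one>), c))"
  define L where "L = g ` (A \<times> A)"
  have NN: "N = q ^ r" unfolding N_def qdef by (rule card_q_pow[OF fin zc Mmax uniq zr znz])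
  have lag: "q * card M = N" unfolding N_def M_def qdef by (rule quot_card[OF fin zc])
  have Mid: "ideal M R" unfolding M_def by (rule cgenideal_ideal[OF zc])
  have NU: "carrier R - Units R = M"
    using local_units[OF fin zc Mmax uniq] ideal.Icarr[OF Mid] unfolding M_def by blast
  have r1: "r \<ge> 1"
  proof (rule ccontr)
    assume "\<not> r \<ge> 1"
    then have "r = 0" by simp
    then have "\<one> = \<zero>" using zr by simp
    then have "\<one> \<in> M" using ideal.Icarr[OF Mid] additive_subgroup.zero_closed[OF ideal.axioms(1)[OF Mid]] by simp
    then have "M = carrier R" by (rule ideal.one_imp_carrier[OF Mid])
    then show False using maximalideal.I_notcarr[OF Mmax] unfolding M_def by simp
  qed
  have Npos: "N > 0" unfolding N_def using fin by (auto simp: card_gt_0_iff)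
  have qpos: "q > 0" using lag Npos by (cases "q = 0") auto
  have mq: "card M = q ^ (r - 1)"
  proof -
    have "q * card M = q * q ^ (r - 1)" using lag NN r1 by (metis power_eq_if not_one_le_zero)
    then show ?thesis using qpos by simp
  qed
  have mN: "real (card M) * real N = real q ^ (2 * r - 1)"
  proof -
    have "card M * N = q ^ (r - 1 + r)" using mq NN by (simp add: power_add)
    moreover have "r - 1 + r = 2 * r - 1" using r1 by simp
    ultimately show ?thesis by (metis of_nat_mult of_nat_power)
  qed
  have Ssub: "S \<subseteq> carrier R" unfolding S_def prod_shift_set_def using Asub by auto
  have finA: "finite A" using Asub fin finite_subset by auto
  have finS: "finite S" using Ssub fin finite_subset by auto
  have Psub: "P \<subseteq> carrier R \<times> carrier R" unfolding P_def using Ssub by auto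
  have Lsub: "L \<subseteq> carrier R \<times> carrier R" unfolding L_def g_def using Asub AU A1U by auto
  have ginj: "inj_on g (A \<times> A)"
  proof (rule inj_onI)
    fix x y assume x: "x \<in> A \<times> A" and y: "y \<in> A \<times> A" and e: "g x = g y"
    obtain b c where bc: "x = (b, c)" "b \<in> A" "c \<in> A" using x by auto
    obtain b' c' where bc': "y = (b', c')" "b' \<in> A" "c' \<in> A" using y by auto
    have cc: "c = c'" using e bc bc' unfolding g_def by simp
    have e2: "c \<otimes> inv (b \<oplus> \<one>) = c \<otimes> inv (b' \<oplus> \<one>)" using e bc bc' cc unfolding g_def by simp
    have cU: "c \<in> Units R" using AU bc by simp
    have u1: "b \<oplus> \<one> \<in> Units R" "b' \<oplus> \<one> \<in> Units R" using A1U bc bc' by auto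
    have k: "inv c \<otimes> (c \<otimes> x) = x" if "x \<in> carrier R" for x
      using cU that by (metis Units_closed Units_inv_closed Units_l_inv l_one m_assoc)
    have "inv (b \<oplus> \<one>) = inv c \<otimes> (c \<otimes> inv (b \<oplus> \<one>))"
      using u1 k by simp
    also have "\<dots> = inv c \<otimes> (c \<otimes> inv (b' \<oplus> \<one>))" using e2 by simp
    also have "\<dots> = inv (b' \<oplus> \<one>)" using u1 k by simp
    finally have "inv (b \<oplus> \<one>) = inv (b' \<oplus> \<one>)" .
    then have "b \<oplus> \<one> = b' \<oplus> \<one>" using u1 by (metis Units_inv_inv)
    then have "b = b'" using bc bc' Asub by (metis subsetD a_comm one_closed add.right_cancel)
    then show "x = y" using bc bc' cc by simp
  qed
  have cardL: "card L = card A ^ 2"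
    unfolding L_def using card_image[OF ginj] by (simp add: card_cartesian_product power2_eq_square)
  have cardP: "card P = card S ^ 2"
    unfolding P_def by (simp add: card_cartesian_product power2_eq_square)
  have lineA: "card A \<le> card {p\<in>P. on_line R (g (b, c)) p}" if b: "b \<in> A" and c: "c \<in> A" for b c
  proof (rule card_inj_on_le[where f="\<lambda>a. (a \<otimes> (b \<oplus> \<one>), c \<otimes> (a \<oplus> \<one>))"])
    have u: "b \<oplus> \<one> \<in> Units R" using A1U b by simp
    have bc': "b \<in> carrier R" "c \<in> carrier R" using b c Asub by auto
    show "inj_on (\<lambda>a. (a \<otimes> (b \<oplus> \<one>), c \<otimes> (a \<oplus> \<one>))) A"
    proof (rule inj_onI)
      fix a a' assume a: "a \<in> A" and a': "a' \<in> A"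
        and e: "(a \<otimes> (b \<oplus> \<one>), c \<otimes> (a \<oplus> \<one>)) = (a' \<otimes> (b \<oplus> \<one>), c \<otimes> (a' \<oplus> \<one>))"
      have ac: "a \<in> carrier R" "a' \<in> carrier R" using a a' Asub by auto
      have "a = (a \<otimes> (b \<oplus> \<one>)) \<otimes> inv (b \<oplus> \<one>)" using u ac unit_cancel_r by simp
      also have "\<dots> = (a' \<otimes> (b \<oplus> \<one>)) \<otimes> inv (b \<oplus> \<one>)" using e by simp
      also have "\<dots> = a'" using u ac unit_cancel_r by simp
      finally show "a = a'" .
    qed
    show "(\<lambda>a. (a \<otimes> (b \<oplus> \<one>), c \<otimes> (a \<oplus> \<one>))) ` A \<subseteq> {p\<in>P. on_line R (g (b, c)) p}"
    proof
      fix w assume "w \<in> (\<lambda>a. (a \<otimes> (b \<oplus> \<one>), c \<otimes> (a \<oplus> \<one>))) ` A"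
      then obtain a where a: "a \<in> A" "w = (a \<otimes> (b \<oplus> \<one>), c \<otimes> (a \<oplus> \<one>))" by auto
      have ac: "a \<in> carrier R" using a Asub by auto
      have ic: "inv (b \<oplus> \<one>) \<in> carrier R" using u by simp
      have "(c \<otimes> inv (b \<oplus> \<one>)) \<otimes> (a \<otimes> (b \<oplus> \<one>)) = (c \<otimes> a) \<otimes> (inv (b \<oplus> \<one>) \<otimes> (b \<oplus> \<one>))"
        using ac bc' ic by algebra
      also have "\<dots> = c \<otimes> a" using u ac bc' by simp
      finally have e1: "(c \<otimes> inv (b \<oplus> \<one>)) \<otimes> (a \<otimes> (b \<oplus> \<one>)) \<oplus> c = c \<otimes> a \<oplus> c" by simp
      have e2: "c \<otimes> a \<oplus> c = c \<otimes> (a \<oplus> \<one>)" using ac bc' by algebra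
      have inS: "a \<otimes> (b \<oplus> \<one>) \<in> S" "c \<otimes> (a \<oplus> \<one>) \<in> S"
        unfolding S_def prod_shift_set_def using a b c by auto
      show "w \<in> {p\<in>P. on_line R (g (b, c)) p}"
        using inS e1 e2 a unfolding P_def on_line_def g_def by simp
    qed
    show "finite {p\<in>P. on_line R (g (b, c)) p}" using finS unfolding P_def by auto
  qed
  define Y where "Y = real (card A)"
  define s where "s = real (card S)"
  define T where "T = sqrt (real q ^ (2 * r - 1))"
  have Ilow: "Y ^ 3 \<le> real (\<Sum>l\<in>L. card {p\<in>P. on_line R l p})"
  proof -
    have "(\<Sum>l\<in>L. card {p\<in>P. on_line R l p}) = (\<Sum>x\<in>A \<times> A. card {p\<in>P. on_line R (g x) p})"
      unfolding L_def by (rule sum.reindex[OF ginj, unfolded comp_def])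
    also have "\<dots> \<ge> (\<Sum>x\<in>A \<times> A. card A)"
      by (rule sum_mono) (use lineA in auto)
    finally have "card A * card A * card A \<le> (\<Sum>l\<in>L. card {p\<in>P. on_line R l p})"
      by (simp add: card_cartesian_product)
    then have "real (card A * card A * card A) \<le> real (\<Sum>l\<in>L. card {p\<in>P. on_line R l p})"
      by (simp only: of_nat_le_iff)
    then show ?thesis unfolding Y_def power3_eq_cube of_nat_mult .
  qed
  have Ib: "real (\<Sum>l\<in>L. card {p\<in>P. on_line R l p})
    \<le> real (card P) * real (card L) / real N
       + sqrt (real (card L) * real (card P) * real (card (carrier R - Units R)) * real N)"
    unfolding N_def by (rule incidence_bound[OF fin Psub Lsub])
  have sq: "sqrt (real (card L) * real (card P) * real (card (carrier R - Units R)) * real N) = Y * s * T"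
  proof -
    have "real (card L) * real (card P) * real (card (carrier R - Units R)) * real N
        = (Y * s)^2 * real q ^ (2 * r - 1)"
      using mN unfolding cardL cardP NU Y_def s_def by (simp add: power2_eq_square mult_ac)
    then show ?thesis unfolding T_def Y_def s_def by (simp add: real_sqrt_mult)
  qed
  have main: "Y ^ 3 \<le> s^2 * Y^2 / real q ^ r + Y * s * T"
    using Ilow Ib sq unfolding cardL cardP NN Y_def s_def by (simp add: mult_ac)
  have "1/2 * min (sqrt (real q ^ r * Y)) (Y^2 / T) \<le> s"
    by (rule final_arith[OF _ _ _ _ main]) (use qpos in \<open>auto simp: Y_def s_def T_def\<close>)
  then show ?thesis unfolding Y_def s_def T_def S_def by simp
qed

end

lemma (in cring) add_one_minus: "a \<in> carrier R \<Longrightarrow> (a \<oplus> \<one>) \<ominus> \<one> = a"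
  by algebra

lemma corollary_aux:
  fixes R :: "'a ring" and A :: "'a set" and r :: nat
  assumes fvr: "finite_valuation_ring R"
    and zc: "z \<in> carrier R" and Mmax0: "maximalideal (Idl\<^bsub>R\<^esub> {z}) R"
    and qdef0: "q = card (carrier (R Quot (Idl\<^bsub>R\<^esub> {z})))"
    and zr: "z [^]\<^bsub>R\<^esub> r = \<zero>\<^bsub>R\<^esub>" and znz: "\<forall>n<r. z [^]\<^bsub>R\<^esub> (n::nat) \<noteq> \<zero>\<^bsub>R\<^esub>"
    and Asub: "A \<subseteq> carrier R"
    and A1: "A \<inter> nonunits R = {}"
    and A2: "A \<inter> {t \<ominus>\<^bsub>R\<^esub> \<one>\<^bsub>R\<^esub> | t. t \<in> nonunits R} = {}"
  shows "1/2 * min (sqrt (real q ^ r * real (card A))) (real (card A) ^ 2 / sqrt (real q ^ (2 * r - 1)))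
     \<le> real (card (prod_shift_set R A))"
proof -
  have cr: "cring R" and fin: "finite (carrier R)" and ex1: "\<exists>!I. maximalideal I R"
    using fvr unfolding finite_valuation_ring_def by auto
  have PI: "PIdl\<^bsub>R\<^esub> z = Idl\<^bsub>R\<^esub> {z}" by (rule cring.cgenideal_eq_genideal[OF cr zc])
  have Mmax: "maximalideal (PIdl\<^bsub>R\<^esub> z) R" using Mmax0 PI by simp
  have uniq: "I = PIdl\<^bsub>R\<^esub> z" if "maximalideal I R" for I
    using ex1 Mmax that by auto
  have qdef: "q = card (a_rcosets\<^bsub>R\<^esub> (PIdl\<^bsub>R\<^esub> z))"
    using qdef0 PI by (simp add: FactRing_def)
  have AU: "a \<in> Units R" if "a \<in> A" for a
    using that A1 Asub unfolding nonunits_def by auto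
  have A1U: "a \<oplus>\<^bsub>R\<^esub> \<one>\<^bsub>R\<^esub> \<in> Units R" if a: "a \<in> A" for a
  proof (rule ccontr)
    assume nu: "a \<oplus>\<^bsub>R\<^esub> \<one>\<^bsub>R\<^esub> \<notin> Units R"
    have ac: "a \<in> carrier R" using a Asub by auto
    have "a \<oplus>\<^bsub>R\<^esub> \<one>\<^bsub>R\<^esub> \<in> carrier R"
      using ac cr by (simp add: cring.axioms(1) ring.ring_simprules(1) ring.ring_simprules(6))
    then have "a \<oplus>\<^bsub>R\<^esub> \<one>\<^bsub>R\<^esub> \<in> nonunits R" using nu unfolding nonunits_def by auto
    moreover have "(a \<oplus>\<^bsub>R\<^esub> \<one>\<^bsub>R\<^esub>) \<ominus>\<^bsub>R\<^esub> \<one>\<^bsub>R\<^esub> = a"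
      by (rule cring.add_one_minus[OF cr ac])
    ultimately have "a \<in> {t \<ominus>\<^bsub>R\<^esub> \<one>\<^bsub>R\<^esub> | t. t \<in> nonunits R}" by (metis (mono_tags, lifting) mem_Collect_eq)
    then show False using A2 a by auto
  qed
  show ?thesis
    by (rule cring.main_bound[OF cr fin zc Mmax uniq zr znz qdef Asub AU A1U])
qed

theorem corollary1p11:
  "\<forall>r::nat. \<exists>c::real. c > 0 \<and>
     (\<forall>(R :: 'a ring) (z :: 'a) (q :: nat) (A :: 'a set).
        finite_valuation_ring R \<and>
        z \<in> carrier R \<and> maximalideal (Idl\<^bsub>R\<^esub> {z}) R \<and>
        q = card (carrier (R Quot (Idl\<^bsub>R\<^esub> {z}))) \<and>
        z [^]\<^bsub>R\<^esub> r = \<zero>\<^bsub>R\<^esub> \<and> (\<forall>n<r. z [^]\<^bsub>R\<^esub> n \<noteq> \<zero>\<^bsub>R\<^esub>) \<and>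
        A \<subseteq> carrier R \<and>
        A \<inter> nonunits R = {} \<and>
        A \<inter> {t \<ominus>\<^bsub>R\<^esub> \<one>\<^bsub>R\<^esub> | t. t \<in> nonunits R} = {}
        \<longrightarrow>
        real (card (prod_shift_set R A)) \<ge>
          c * min (sqrt (real q ^ r * real (card A)))
                  (real (card A) ^ 2 / sqrt (real q ^ (2 * r - 1))))"
  apply (intro allI)
  apply (rule exI[of _ "1/2"])
  apply (intro conjI allI impI)
   apply simp
  apply (elim conjE)
  apply (rule corollary_aux; assumption)
  done

end
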